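(* Let $f,g:\{0,\dots,r-1\}^n\to\mathbb{R}$ be $r$-valued fitness functions such that the first position of $f$ weakly prefers the value $r-1$ and the first position of $g$ is neutral. Let $p$ and $q$ be the frequency matrices of the $r$-cGA optimizing $f$ and $g$, respectively. Then for all $t\in\mathbb{N}$, $p^{(t)}_{1,r-1}$ stochastically dominates $q^{(t)}_{1,r-1}$.
   Context: Let $n\geq 1$, $r\geq 2$ be integers and $K>0$. The $r$-cGA maximizing a function $h$ maintains frequencies $p^{(t)}_{i,j}$ ($i\in\{1,\dots,n\}$, $j\in\{0,\dots,r-1\}$), initialized to $1/r$. In iteration $t$ it samples $x,y\in\{0,\dots,r-1\}^n$ independently, each position $i$ independently with $\Pr[x_i=j]=p^{(t)}_{i,j}$; if $h(x)<h(y)$ it swaps $x$ and $y$; then it sets $p^{(t+1)}_{i,j}=p^{(t)}_{i,j}+\frac1K(\mathbf{1}[x_i=j]-\mathbf{1}[y_i=j])$ for all $i,j$, with no margins. It is assumed (well-behaved frequency assumption) that $1/r$ is an integer multiple of $1/K$, so frequencies lie in $\{0,1/K,\dots,1\}$. A position $i$ is neutral for $h$ if $h(x)=h(x')$ whenever $x,x'$ agree outside position $i$. The function $f$ weakly prefers value $j$ at position $i$ if for all $x\in\{0,\dots,r-1\}^n$, $f(x_1,\dots,x_{i-1},x_i,x_{i+1},\dots,x_n)\leq f(x_1,\dots,x_{i-1},j,x_{i+1},\dots,x_n)$. A random variable $Z$ stochastically dominates $Y$ if $\Pr[Z\leq\lambda]\leq\Pr[Y\leq\lambda]$ for all $\lambda\in\mathbb{R}$.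 *)

theory Defs
  imports "HOL-Probability.Probability"
begin

text \<open>Positions are indexed 0..n-1 (paper: 1..n), values 0..r-1.
  A search point is a function nat => nat that is 0 outside positions 0..n-1.\<close>

definition search_space :: "nat \<Rightarrow> nat \<Rightarrow> (nat \<Rightarrow> nat) set" where
  "search_space n r = {x. (\<forall>i<n. x i < r) \<and> (\<forall>i. n \<le> i \<longrightarrow> x i = 0)}"

text \<open>Frequency matrix: p i j = frequency of value j at position i.\<close>
type_synonym freq = "nat \<Rightarrow> nat \<Rightarrow> real"

text \<open>Categorical distribution on {0..<r} with weights w 0, ..., w (r-1)
  (fallback to point mass at 0 if weights are not a probability vector;
  never reached along the run of the algorithm).\<close>
definition categorical :: "(nat \<Rightarrow> real) \<Rightarrow> nat \<Rightarrow> nat pmf" where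
  "categorical w r =
     (let xs = map (\<lambda>j. (j, w j)) [0..<r] in
      if pmf_of_list_wf xs then pmf_of_list xs else return_pmf 0)"

definition sample :: "nat \<Rightarrow> nat \<Rightarrow> freq \<Rightarrow> (nat \<Rightarrow> nat) pmf" where
  "sample n r p = Pi_pmf {..<n} 0 (\<lambda>i. categorical (p i) r)"

definition ind :: "bool \<Rightarrow> real" where
  "ind b = (if b then 1 else 0)"

text \<open>One iteration of the r-cGA (no margins) maximizing h.\<close>
definition rcga_step :: "((nat \<Rightarrow> nat) \<Rightarrow> real) \<Rightarrow> nat \<Rightarrow> nat \<Rightarrow> real \<Rightarrow> freq \<Rightarrow> freq pmf" where
  "rcga_step h n r K p =
     do { x \<leftarrow> sample n r p;
          y \<leftarrow> sample n r p;
          let (x', y') = (if h x < h y then (y, x) else (x, y));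
          return_pmf (\<lambda>i j. p i j + (1 / K) * (ind (x' i = j) - ind (y' i = j))) }"

primrec rcga :: "((nat \<Rightarrow> nat) \<Rightarrow> real) \<Rightarrow> nat \<Rightarrow> nat \<Rightarrow> real \<Rightarrow> nat \<Rightarrow> freq pmf" where
  "rcga h n r K 0 = return_pmf (\<lambda>i j. 1 / real r)"
| "rcga h n r K (Suc t) = rcga h n r K t \<bind> rcga_step h n r K"

definition neutral :: "((nat \<Rightarrow> nat) \<Rightarrow> real) \<Rightarrow> nat \<Rightarrow> nat \<Rightarrow> nat \<Rightarrow> bool" where
  "neutral h n r i = (\<forall>x \<in> search_space n r. \<forall>x' \<in> search_space n r.
       (\<forall>k. k \<noteq> i \<longrightarrow> x k = x' k) \<longrightarrow> h x = h x')"

definition weakly_prefers :: "((nat \<Rightarrow> nat) \<Rightarrow> real) \<Rightarrow> nat \<Rightarrow> nat \<Rightarrow> nat \<Rightarrow> nat \<Rightarrow> bool" where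
  "weakly_prefers f n r i j = (\<forall>x \<in> search_space n r. f x \<le> f (x(i := j)))"

definition stoch_dom :: "real pmf \<Rightarrow> real pmf \<Rightarrow> bool" where
  "stoch_dom Z Y = (\<forall>c. measure_pmf.prob Z {..c} \<le> measure_pmf.prob Y {..c})"

end

theory Submission imports Defs begin

lemma measure_bind_pmf': "measure (bind_pmf M N) X = (\<integral>x. measure (N x) X \<partial>M)"
proof -
  have int: "integrable M (\<lambda>x. measure (N x) X)"
    by (rule measure_pmf.integrable_const_bound[where B=1]) auto
  have "emeasure (bind_pmf M N) X = (\<integral>\<^sup>+x. ennreal (measure (N x) X) \<partial>M)"
    using emeasure_bind_pmf[of M N X] by (simp only: measure_pmf.emeasure_eq_measure)
  also have "\<dots> = ennreal (\<integral>x. measure (N x) X \<partial>M)"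
    by (rule nn_integral_eq_integral[OF int]) auto
  finally show ?thesis
    by (simp add: measure_pmf.emeasure_eq_measure integral_nonneg_AE)
qed

lemma pmf_categorical:
  assumes "\<forall>j<r. 0 \<le> w j" "(\<Sum>j<r. w j) = 1"
  shows "pmf (categorical w r) i = (if i < r then w i else 0)"
proof -
  have wf: "pmf_of_list_wf (map (\<lambda>j. (j, w j)) [0..<r])"
    using assms by (auto simp: pmf_of_list_wf_def o_def sum_list_sum_nth atLeast0LessThan)
  have "sum_list (map snd (filter (\<lambda>z. fst z = i) (map (\<lambda>j. (j, w j)) [0..<r])))
        = (if i < r then w i else 0)"
  proof -
    have "filter (\<lambda>z. fst z = i) (map (\<lambda>j. (j, w j)) [0..<r]) = map (\<lambda>j. (j, w j)) (filter (\<lambda>j. j = i) [0..<r])"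
      by (simp add: filter_map o_def)
    moreover have "filter (\<lambda>j. j = i) [0..<r] = (if i < r then [i] else [])"
      by (induction r) auto
    ultimately show ?thesis by simp
  qed
  with wf show ?thesis unfolding categorical_def Let_def by (simp add: pmf_pmf_of_list)
qed

lemma set_categorical:
  assumes "r > 0"
  shows "set_pmf (categorical w r) \<subseteq> {..<r}"
proof (cases "pmf_of_list_wf (map (\<lambda>j. (j, w j)) [0..<r])")
  case True
  then show ?thesis unfolding categorical_def Let_def using set_pmf_of_list[OF True] by auto
next
  case False
  then show ?thesis unfolding categorical_def Let_def using assms by auto
qed

lemma sample_comp:
  assumes "x \<in> set_pmf (sample n r p)"
  shows "\<forall>i<n. x i \<in> set_pmf (categorical (p i) r)" "\<forall>i. n \<le> i \<longrightarrow> x i = 0"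
  using assms unfolding sample_def by (auto simp: set_Pi_pmf PiE_dflt_def)

lemma sample_ss:
  assumes "x \<in> set_pmf (sample n r p)" "r > 0"
  shows "x \<in> search_space n r"
  using sample_comp[OF assms(1)] set_categorical[OF assms(2)] unfolding search_space_def by blast

definition sw :: "((nat \<Rightarrow> nat) \<Rightarrow> real) \<Rightarrow> (nat \<Rightarrow> nat) \<times> (nat \<Rightarrow> nat) \<Rightarrow> (nat \<Rightarrow> nat) \<times> (nat \<Rightarrow> nat)" where
  "sw h z = (if h (fst z) < h (snd z) then (snd z, fst z) else z)"

definition upd :: "real \<Rightarrow> freq \<Rightarrow> (nat \<Rightarrow> nat) \<times> (nat \<Rightarrow> nat) \<Rightarrow> freq" where
  "upd K p z = (\<lambda>i j. p i j + (1 / K) * (ind (fst z i = j) - ind (snd z i = j)))"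

lemma step_eq:
  "rcga_step h n r K p = map_pmf (\<lambda>z. upd K p (sw h z)) (pair_pmf (sample n r p) (sample n r p))"
  unfolding rcga_step_def pair_pmf_def map_pmf_def sw_def upd_def
  apply (simp add: bind_assoc_pmf bind_return_pmf Let_def)
  apply (intro bind_pmf_cong refl)
  apply (simp split: if_split)
  done

definition Inv :: "real \<Rightarrow> nat \<Rightarrow> freq \<Rightarrow> bool" where
  "Inv K r p \<longleftrightarrow> (\<forall>j. \<exists>k::int. p 0 j = of_int k / K) \<and> (\<forall>j<r. 0 \<le> p 0 j) \<and> (\<Sum>j<r. p 0 j) = 1"

lemma ind_sum: "(u::nat) < r \<Longrightarrow> (\<Sum>j<r. ind (u = j)) = 1"
  unfolding ind_def using sum.delta'[of "{..<r}" u "\<lambda>_. (1::real)"] by simp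

lemma cat_supp:
  assumes "Inv K r p" "j \<in> set_pmf (categorical (p 0) r)"
  shows "j < r" "0 < p 0 j"
proof -
  have "pmf (categorical (p 0) r) j \<noteq> 0" using assms(2) by (simp add: set_pmf_eq)
  then have "(if j < r then p 0 j else 0) \<noteq> 0"
    using pmf_categorical[of r "p 0" j] assms(1) unfolding Inv_def by simp
  then show "j < r" "0 < p 0 j" using assms(1) unfolding Inv_def
    by (auto split: if_splits simp: order_le_less)
qed

lemma inv_step:
  assumes inv: "Inv K r p" and K: "K > 0" and r: "r > 0" and n: "n \<ge> 1"
    and q: "q \<in> set_pmf (rcga_step h n r K p)"
  shows "Inv K r q"
proof -
  obtain x y where xy: "x \<in> set_pmf (sample n r p)" "y \<in> set_pmf (sample n r p)"
    and qd: "q = upd K p (sw h (x, y))"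
    using q unfolding step_eq by auto
  define u where "u = fst (sw h (x, y))"
  define v where "v = snd (sw h (x, y))"
  have uv: "u \<in> {x, y}" "v \<in> {x, y}" unfolding u_def v_def sw_def by auto
  have "u 0 \<in> set_pmf (categorical (p 0) r)" "v 0 \<in> set_pmf (categorical (p 0) r)"
    using uv sample_comp(1)[OF xy(1)] sample_comp(1)[OF xy(2)] n by auto
  note cu = cat_supp[OF inv this(1)] and cv = cat_supp[OF inv this(2)]
  have q0: "q 0 j = p 0 j + (1 / K) * (ind (u 0 = j) - ind (v 0 = j))" for j
    unfolding qd upd_def u_def v_def by simp
  have grid: "\<exists>k::int. q 0 j = of_int k / K" for j
  proof -
    obtain k :: int where k: "p 0 j = of_int k / K" using inv unfolding Inv_def by blast
    show ?thesis
      by (rule exI[of _ "k + (if u 0 = j then 1 else 0) - (if v 0 = j then 1 else 0)"])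
         (use K in \<open>auto simp: q0 k ind_def field_simps\<close>)
  qed
  have nn: "0 \<le> q 0 j" if "j < r" for j
  proof (cases "v 0 = j \<and> u 0 \<noteq> j")
    case True
    obtain k :: int where k: "p 0 j = of_int k / K" using inv unfolding Inv_def by blast
    have "0 < p 0 j" using cv True by auto
    then have "k \<ge> 1" using K k by (simp add: zero_less_divide_iff)
    then have "(1::real) \<le> of_int k" by simp
    then show ?thesis using True K by (simp add: q0 k ind_def field_simps)
  next
    case False
    then have "0 \<le> p 0 j" using inv that unfolding Inv_def by auto
    with False show ?thesis using K by (auto simp: q0 ind_def)
  qed
  have "(\<Sum>j<r. q 0 j) = (\<Sum>j<r. p 0 j) + (1 / K) * ((\<Sum>j<r. ind (u 0 = j)) - (\<Sum>j<r. ind (v 0 = j)))"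
    by (simp add: q0 sum.distrib sum_distrib_left sum_subtractf algebra_simps)
  also have "\<dots> = 1" using inv cu cv by (simp add: ind_sum Inv_def)
  finally show ?thesis unfolding Inv_def using grid nn by blast
qed

lemma inv_rcga:
  assumes K: "K > 0" and r: "r > 0" and n: "n \<ge> 1" and m: "\<exists>m::nat. 1 / real r = real m * (1 / K)"
  shows "p \<in> set_pmf (rcga h n r K t) \<Longrightarrow> Inv K r p"
proof (induction t arbitrary: p)
  case 0
  obtain m :: nat where "1 / real r = real m * (1 / K)" using m by blast
  then have "1 / real r = of_int (int m) / K" by simp
  moreover have "(\<Sum>j<r. 1 / real r) = 1" using r by simp
  ultimately show ?case using 0 unfolding Inv_def by (auto intro!: exI[of _ "int m"])
next
  case (Suc t)
  then obtain p' where "p' \<in> set_pmf (rcga h n r K t)" "p \<in> set_pmf (rcga_step h n r K p')" by auto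
  then show ?case using Suc.IH inv_step K r n by blast
qed

definition Ep :: "((nat \<Rightarrow> nat) \<Rightarrow> real) \<Rightarrow> nat \<Rightarrow> ((nat \<Rightarrow> nat) \<times> (nat \<Rightarrow> nat)) set" where
  "Ep h k = {z. fst (sw h z) 0 = k \<and> snd (sw h z) 0 \<noteq> k}"
definition Em :: "((nat \<Rightarrow> nat) \<Rightarrow> real) \<Rightarrow> nat \<Rightarrow> ((nat \<Rightarrow> nat) \<times> (nat \<Rightarrow> nat)) set" where
  "Em h k = {z. snd (sw h z) 0 = k \<and> fst (sw h z) 0 \<noteq> k}"

definition \<sigma> :: "(nat \<Rightarrow> nat) \<times> (nat \<Rightarrow> nat) \<Rightarrow> (nat \<Rightarrow> nat) \<times> (nat \<Rightarrow> nat)" where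
  "\<sigma> z = ((fst z)(0 := snd z 0), (snd z)(0 := fst z 0))"

lemma \<sigma>_inv: "\<sigma> (\<sigma> z) = z"
  by (cases z) (auto simp: \<sigma>_def)

lemma \<sigma>_inj: "inj \<sigma>"
  by (metis \<sigma>_inv injI)

lemma val_cases:
  assumes K: "K > 0"
  shows "measure (rcga_step h n r K p) {q. q 0 k \<le> c} =
    (if p 0 k + 1 / K \<le> c then 1
     else if p 0 k \<le> c then 1 - measure (pair_pmf (sample n r p) (sample n r p)) (Ep h k)
     else if p 0 k - 1 / K \<le> c then measure (pair_pmf (sample n r p) (sample n r p)) (Em h k)
     else 0)"
proof -
  let ?M = "pair_pmf (sample n r p) (sample n r p)"
  have "measure (rcga_step h n r K p) {q. q 0 k \<le> c} = measure ?M {z. upd K p (sw h z) 0 k \<le> c}"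
    unfolding step_eq by (simp add: vimage_def)
  also have "{z. upd K p (sw h z) 0 k \<le> c} =
    (if p 0 k + 1 / K \<le> c then UNIV
     else if p 0 k \<le> c then - Ep h k
     else if p 0 k - 1 / K \<le> c then Em h k
     else {})"
  proof -
    have v: "upd K p (sw h z) 0 k = p 0 k + (if z \<in> Ep h k then 1 / K else if z \<in> Em h k then - (1 / K) else 0)" for z
      by (auto simp: upd_def Ep_def Em_def ind_def)
    have d: "z \<notin> Ep h k \<or> z \<notin> Em h k" for z by (auto simp: Ep_def Em_def)
    have g: "{z. a + (if z \<in> A then e else if z \<in> B then - e else 0) \<le> c} =
      (if a + e \<le> c then UNIV else if a \<le> c then - A else if a - e \<le> c then B else {})"
      if "e > 0" "\<And>z. z \<notin> A \<or> z \<notin> B" for a e :: real and A B :: "'x set"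
    proof (rule set_eqI)
      fix z
      show "z \<in> {z. a + (if z \<in> A then e else if z \<in> B then - e else 0) \<le> c} \<longleftrightarrow>
        z \<in> (if a + e \<le> c then UNIV else if a \<le> c then - A else if a - e \<le> c then B else {})"
        using that(1) that(2)[of z] by (cases "z \<in> A"; cases "z \<in> B") auto
    qed
    have "0 < 1 / K" using K by simp
    show ?thesis
      unfolding v by (rule g[OF \<open>0 < 1 / K\<close> d])
  qed
  finally show ?thesis
    by (simp add: measure_pmf.prob_compl[unfolded space_measure_pmf, symmetric] Compl_eq_Diff_UNIV)
qed

lemma sum_EpEm:
  assumes inv: "Inv K r p" and n: "n \<ge> 1" and k: "k < r"
  shows "measure (pair_pmf (sample n r p) (sample n r p)) (Ep h k)
       + measure (pair_pmf (sample n r p) (sample n r p)) (Em h k) = 2 * p 0 k * (1 - p 0 k)"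
proof -
  let ?M = "pair_pmf (sample n r p) (sample n r p)"
  let ?C = "categorical (p 0) r"
  have un: "Ep h k \<union> Em h k = {z. (fst z 0 = k) \<noteq> (snd z 0 = k)}"
    by (auto simp: Ep_def Em_def sw_def split: if_splits)
  have dj: "Ep h k \<inter> Em h k = {}" by (auto simp: Ep_def Em_def)
  have "measure ?M (Ep h k) + measure ?M (Em h k) = measure ?M (Ep h k \<union> Em h k)"
    using dj by (simp add: measure_pmf.finite_measure_Union)
  also have "\<dots> = measure (map_pmf (\<lambda>(x, y). (x 0, y 0)) ?M) ({k} \<times> (- {k}) \<union> (- {k}) \<times> {k})"
    unfolding un by (simp add: vimage_def split_beta) (metis)
  also have "map_pmf (\<lambda>(x, y). (x 0, y 0)) ?M = pair_pmf ?C ?C"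
    unfolding map_pair using n Pi_pmf_component[of "{..<n}" 0 0 "\<lambda>i. categorical (p i) r"]
    by (simp add: sample_def)
  also have "measure (pair_pmf ?C ?C) ({k} \<times> (- {k}) \<union> (- {k}) \<times> {k})
      = measure (pair_pmf ?C ?C) ({k} \<times> (- {k})) + measure (pair_pmf ?C ?C) ((- {k}) \<times> {k})"
    by (rule measure_pmf.finite_measure_Union) auto
  also have "\<dots> = measure ?C {k} * measure ?C (- {k}) + measure ?C (- {k}) * measure ?C {k}"
    by (simp add: measure_pmf_prob_product)
  also have "measure ?C {k} = p 0 k"
    using inv k unfolding Inv_def by (simp add: measure_pmf_single pmf_categorical)
  also have "measure ?C (- {k}) = 1 - p 0 k"
    using measure_pmf.prob_compl[of "{k}" ?C] \<open>measure ?C {k} = p 0 k\<close>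
    by (simp add: Compl_eq_Diff_UNIV)
  finally show ?thesis by simp
qed

lemma pmf_sample_upd:
  assumes n: "n \<ge> 1"
  shows "pmf (sample n r p) (x(0 := v)) =
    pmf (categorical (p 0) r) v * (if \<forall>i. i \<notin> {..<n} \<longrightarrow> x i = 0 then \<Prod>i\<in>{..<n} - {0}. pmf (categorical (p i) r) (x i) else 0)"
proof -
  have z: "0 \<in> {..<n}" using n by simp
  have c1: "(\<forall>i. i \<notin> {..<n} \<longrightarrow> (x(0 := v)) i = 0) \<longleftrightarrow> (\<forall>i. i \<notin> {..<n} \<longrightarrow> x i = 0)"
    using z by auto
  have c2: "(\<Prod>i\<in>{..<n}. pmf (categorical (p i) r) ((x(0 := v)) i)) =
    pmf (categorical (p 0) r) v * (\<Prod>i\<in>{..<n} - {0}. pmf (categorical (p i) r) (x i))"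
    by (subst prod.remove[OF _ z]) (auto intro!: prod.cong)
  show ?thesis unfolding sample_def pmf_Pi[OF finite_lessThan] c1 c2 by auto
qed

lemma map_\<sigma>:
  assumes n: "n \<ge> 1"
  shows "map_pmf \<sigma> (pair_pmf (sample n r p) (sample n r p)) = pair_pmf (sample n r p) (sample n r p)"
proof (rule pmf_eqI)
  fix z :: "(nat \<Rightarrow> nat) \<times> (nat \<Rightarrow> nat)"
  obtain x y where z: "z = (x, y)" by fastforce
  have "pmf (map_pmf \<sigma> (pair_pmf (sample n r p) (sample n r p))) z
     = pmf (map_pmf \<sigma> (pair_pmf (sample n r p) (sample n r p))) (\<sigma> (\<sigma> z))"
    by (simp add: \<sigma>_inv)
  also have "\<dots> = pmf (pair_pmf (sample n r p) (sample n r p)) (\<sigma> z)"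
    by (rule pmf_map_inj'[OF \<sigma>_inj])
  also have "\<dots> = pmf (pair_pmf (sample n r p) (sample n r p)) z"
  proof -
    have ex: "x = x(0 := x 0)" "y = y(0 := y 0)" by simp_all
    have "pmf (pair_pmf (sample n r p) (sample n r p)) (\<sigma> z) =
       pmf (sample n r p) (x(0 := y 0)) * pmf (sample n r p) (y(0 := x 0))"
      by (simp add: z \<sigma>_def pmf_pair)
    also have "\<dots> = pmf (sample n r p) (x(0 := x 0)) * pmf (sample n r p) (y(0 := y 0))"
      unfolding pmf_sample_upd[OF n] by (simp add: algebra_simps)
    finally show ?thesis using ex by (simp add: z pmf_pair)
  qed
  finally show "pmf (map_pmf \<sigma> (pair_pmf (sample n r p) (sample n r p))) z = pmf (pair_pmf (sample n r p) (sample n r p)) z" .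
qed

lemma measure_\<sigma>:
  assumes n: "n \<ge> 1"
  shows "measure (pair_pmf (sample n r p) (sample n r p)) A =
         measure (pair_pmf (sample n r p) (sample n r p)) (\<sigma> -` A \<inter> set_pmf (pair_pmf (sample n r p) (sample n r p)))"
  by (metis measure_map_pmf measure_Int_set_pmf map_\<sigma>[OF n])

lemma ss_upd: "x \<in> search_space n r \<Longrightarrow> v < r \<Longrightarrow> n \<ge> 1 \<Longrightarrow> x(0 := v) \<in> search_space n r"
  unfolding search_space_def by auto

lemma Em_le_Ep:
  assumes n: "n \<ge> 1" and r: "r > 0" and k: "k < r"
    and H: "\<forall>x\<in>search_space n r. h x \<le> h (x(0 := k))"
  shows "measure (pair_pmf (sample n r p) (sample n r p)) (Em h k)
       \<le> measure (pair_pmf (sample n r p) (sample n r p)) (Ep h k)"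
proof -
  let ?M = "pair_pmf (sample n r p) (sample n r p)"
  have "\<sigma> -` Em h k \<inter> set_pmf ?M \<subseteq> Ep h k"
  proof
    fix z assume z: "z \<in> \<sigma> -` Em h k \<inter> set_pmf ?M"
    obtain x y where zxy: "z = (x, y)" by fastforce
    have xs: "x \<in> search_space n r" and ys: "y \<in> search_space n r"
      using z zxy sample_ss r by auto
    have x0: "x 0 < r" and y0: "y 0 < r" using xs ys n unfolding search_space_def by auto
    define x' where "x' = x(0 := y 0)"
    define y' where "y' = y(0 := x 0)"
    have x's: "x' \<in> search_space n r" and y's: "y' \<in> search_space n r"
      unfolding x'_def y'_def using ss_upd xs ys x0 y0 n by auto
    have E: "(x', y') \<in> Em h k" using z zxy unfolding x'_def y'_def \<sigma>_def by auto
    show "z \<in> Ep h k"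
    proof (cases "h x' < h y'")
      case True
      then have a: "y 0 = k" "x 0 \<noteq> k" using E unfolding Em_def sw_def x'_def y'_def by auto
      have "x' = x(0 := k)" using a unfolding x'_def by simp
      then have "h x \<le> h x'" using H xs by simp
      moreover have "y = y'(0 := k)" using a unfolding y'_def by auto
      then have "h y' \<le> h y" using H y's by metis
      ultimately have "h x < h y" using True by simp
      then show ?thesis using a zxy unfolding Ep_def sw_def by auto
    next
      case False
      then have a: "x 0 = k" "y 0 \<noteq> k" using E unfolding Em_def sw_def x'_def y'_def by auto
      have "x = x'(0 := k)" using a unfolding x'_def by auto
      then have "h x' \<le> h x" using H x's by metis
      moreover have "y' = y(0 := k)" using a unfolding y'_def by simp
      then have "h y \<le> h y'" using H ys by simp
      ultimately have "\<not> h x < h y" using False by simp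
      then show ?thesis using a zxy unfolding Ep_def sw_def by auto
    qed
  qed
  then have "measure ?M (\<sigma> -` Em h k \<inter> set_pmf ?M) \<le> measure ?M (Ep h k)"
    by (rule measure_pmf.finite_measure_mono) simp
  then show ?thesis using measure_\<sigma>[OF n, of r p "Em h k"] by simp
qed

lemma Ep_le_Em:
  assumes n: "n \<ge> 1" and r: "r > 0" and k: "k < r"
    and H: "\<forall>x\<in>search_space n r. h (x(0 := k)) \<le> h x"
  shows "measure (pair_pmf (sample n r p) (sample n r p)) (Ep h k)
       \<le> measure (pair_pmf (sample n r p) (sample n r p)) (Em h k)"
proof -
  let ?M = "pair_pmf (sample n r p) (sample n r p)"
  have "\<sigma> -` Ep h k \<inter> set_pmf ?M \<subseteq> Em h k"
  proof
    fix z assume z: "z \<in> \<sigma> -` Ep h k \<inter> set_pmf ?M"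
    obtain x y where zxy: "z = (x, y)" by fastforce
    have xs: "x \<in> search_space n r" and ys: "y \<in> search_space n r"
      using z zxy sample_ss r by auto
    have x0: "x 0 < r" and y0: "y 0 < r" using xs ys n unfolding search_space_def by auto
    define x' where "x' = x(0 := y 0)"
    define y' where "y' = y(0 := x 0)"
    have x's: "x' \<in> search_space n r" and y's: "y' \<in> search_space n r"
      unfolding x'_def y'_def using ss_upd xs ys x0 y0 n by auto
    have E: "(x', y') \<in> Ep h k" using z zxy unfolding x'_def y'_def \<sigma>_def by auto
    show "z \<in> Em h k"
    proof (cases "h x' < h y'")
      case True
      then have a: "x 0 = k" "y 0 \<noteq> k" using E unfolding Ep_def sw_def x'_def y'_def by auto
      have "x = x'(0 := k)" using a unfolding x'_def by auto
      then have "h x \<le> h x'" using H x's by metis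
      moreover have "y' = y(0 := k)" using a unfolding y'_def by simp
      then have "h y' \<le> h y" using H ys by simp
      ultimately have "h x < h y" using True by simp
      then show ?thesis using a zxy unfolding Em_def sw_def by auto
    next
      case False
      then have a: "y 0 = k" "x 0 \<noteq> k" using E unfolding Ep_def sw_def x'_def y'_def by auto
      have "x' = x(0 := k)" using a unfolding x'_def by simp
      then have "h x' \<le> h x" using H xs by simp
      moreover have "y = y'(0 := k)" using a unfolding y'_def by auto
      then have "h y \<le> h y'" using H y's by metis
      ultimately have "\<not> h x < h y" using False by simp
      then show ?thesis using a zxy unfolding Em_def sw_def by auto
    qed
  qed
  then have "measure ?M (\<sigma> -` Ep h k \<inter> set_pmf ?M) \<le> measure ?M (Em h k)"
    by (rule measure_pmf.finite_measure_mono) simp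
  then show ?thesis using measure_\<sigma>[OF n, of r p "Ep h k"] by simp
qed

definition \<Psi> :: "real \<Rightarrow> real \<Rightarrow> real \<Rightarrow> real" where
  "\<Psi> K c a = (if a + 1 / K \<le> c then 1 else if a \<le> c then 1 - a * (1 - a)
     else if a - 1 / K \<le> c then a * (1 - a) else 0)"

lemma step_bound:
  assumes inv: "Inv K r p" and K: "K > 0" and n: "n \<ge> 1" and r: "r \<ge> 2"
    and H: "\<forall>x\<in>search_space n r. h x \<le> h (x(0 := r - 1))"
  shows "measure (rcga_step h n r K p) {q. q 0 (r - 1) \<le> c} \<le> \<Psi> K c (p 0 (r - 1))"
proof -
  let ?M = "pair_pmf (sample n r p) (sample n r p)"
  have s: "measure ?M (Ep h (r - 1)) + measure ?M (Em h (r - 1)) = 2 * p 0 (r - 1) * (1 - p 0 (r - 1))"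
    using sum_EpEm[OF inv n] r by simp
  have le: "measure ?M (Em h (r - 1)) \<le> measure ?M (Ep h (r - 1))"
    using Em_le_Ep[OF n _ _ H] r by simp
  show ?thesis unfolding val_cases[OF K] \<Psi>_def using s le by auto
qed

lemma step_eq_neutral:
  assumes inv: "Inv K r p" and K: "K > 0" and n: "n \<ge> 1" and r: "r \<ge> 2"
    and H: "\<forall>x\<in>search_space n r. h x = h (x(0 := r - 1))"
  shows "measure (rcga_step h n r K p) {q. q 0 (r - 1) \<le> c} = \<Psi> K c (p 0 (r - 1))"
proof -
  let ?M = "pair_pmf (sample n r p) (sample n r p)"
  have s: "measure ?M (Ep h (r - 1)) + measure ?M (Em h (r - 1)) = 2 * p 0 (r - 1) * (1 - p 0 (r - 1))"
    using sum_EpEm[OF inv n] r by simp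
  have le: "measure ?M (Em h (r - 1)) \<le> measure ?M (Ep h (r - 1))"
    using Em_le_Ep[OF n _ _] H r by simp
  have ge: "measure ?M (Ep h (r - 1)) \<le> measure ?M (Em h (r - 1))"
    using Ep_le_Em[OF n _ _] H r by simp
  show ?thesis unfolding val_cases[OF K] \<Psi>_def using s le ge by auto
qed

lemma int_bdd: "(\<And>x. \<bar>f x\<bar> \<le> B) \<Longrightarrow> integrable (measure_pmf N) (f :: 'a \<Rightarrow> real)"
  by (rule measure_pmf.integrable_const_bound[where B=B]) auto

lemma integral_lin:
  fixes N :: "real pmf"
  shows "(\<integral>v. \<alpha> * ind (v \<le> c1) + \<beta> * ind (v \<le> c2) + \<gamma> * ind (v \<le> c3) \<partial>N)
    = \<alpha> * measure N {..c1} + \<beta> * measure N {..c2} + \<gamma> * measure N {..c3}"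
proof -
  have i: "ind (v \<le> c) = indicator {..c} v" for v c :: real
    by (simp add: ind_def indicator_def)
  have ii: "integrable (measure_pmf N) (\<lambda>v. a * indicator {..c} v :: real)" for a c :: real
    by (rule int_bdd[where B="\<bar>a\<bar>"]) (simp add: indicator_def abs_mult)
  show ?thesis unfolding i
    by (simp add: Bochner_Integration.integral_add[OF Bochner_Integration.integrable_add[OF ii ii] ii] Bochner_Integration.integral_add[OF ii ii])
qed

definition hh :: "real \<Rightarrow> real" where "hh a = a * (1 - a)"
definition w1 :: "real \<Rightarrow> real \<Rightarrow> real" where
  "w1 K c = 1 - max 0 (hh (of_int \<lfloor>c * K\<rfloor> / K))"
definition w2 :: "real \<Rightarrow> real \<Rightarrow> real" where
  "w2 K c = max 0 (hh ((of_int \<lfloor>c * K\<rfloor> + 1) / K))"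

lemma hh_le: "hh a \<le> 1 / 4"
proof -
  have "0 \<le> (a - 1/2)^2" by simp
  then show ?thesis unfolding hh_def by (simp add: power2_eq_square algebra_simps)
qed

lemma w_props: "0 \<le> 1 - w1 K c" "0 \<le> w1 K c - w2 K c" "0 \<le> w2 K c"
  unfolding w1_def w2_def using hh_le[of "of_int \<lfloor>c * K\<rfloor> / K"] hh_le[of "(of_int \<lfloor>c * K\<rfloor> + 1) / K"]
  by auto

lemma psi_lin:
  assumes K: "K > 0" and a: "0 \<le> a" "a \<le> 1" and j: "a = of_int j / K"
  shows "\<Psi> K c a = (1 - w1 K c) * ind (a \<le> c - 1 / K) + (w1 K c - w2 K c) * ind (a \<le> c)
     + w2 K c * ind (a \<le> c + 1 / K)"
proof -
  have hn: "0 \<le> hh a" unfolding hh_def using a by simp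
  have e1: "a + 1 / K \<le> c \<longleftrightarrow> of_int j + 1 \<le> c * K"
    using K unfolding j by (simp add: field_simps)
  have e2: "a \<le> c \<longleftrightarrow> of_int j \<le> c * K"
    using K unfolding j by (simp add: field_simps)
  have e3: "a - 1 / K \<le> c \<longleftrightarrow> of_int j - 1 \<le> c * K"
    using K unfolding j by (simp add: field_simps)
  have i1: "a \<le> c - 1 / K \<longleftrightarrow> a + 1 / K \<le> c" by linarith
  have i3: "a \<le> c + 1 / K \<longleftrightarrow> a - 1 / K \<le> c" by linarith
  show ?thesis
  proof (cases "a + 1 / K \<le> c")
    case True
    then have "a \<le> c" "a - 1 / K \<le> c" using K by (simp_all add: e1 e2 e3)
    then show ?thesis using True unfolding \<Psi>_def i1 i3 ind_def by simp
  next
    case F1: False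
    show ?thesis
    proof (cases "a \<le> c")
      case True
      have "\<lfloor>c * K\<rfloor> = j" using True F1 unfolding e1 e2 by (simp add: floor_eq_iff)
      then have "of_int \<lfloor>c * K\<rfloor> / K = a" using j by simp
      then have "w1 K c = 1 - hh a" unfolding w1_def using hn by simp
      moreover have "a - 1 / K \<le> c" using True K by (simp add: e2 e3)
      ultimately show ?thesis using True F1 unfolding \<Psi>_def i1 i3 ind_def hh_def by simp
    next
      case F2: False
      show ?thesis
      proof (cases "a - 1 / K \<le> c")
        case True
        have "\<lfloor>c * K\<rfloor> = j - 1" using True F2 unfolding e2 e3 by (simp add: floor_eq_iff)
        then have "(of_int \<lfloor>c * K\<rfloor> + 1) / K = a" using j by simp
        then have "w2 K c = hh a" unfolding w2_def using hn by simp
        then show ?thesis using True F1 F2 unfolding \<Psi>_def i1 i3 ind_def hh_def by simp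
      next
        case False
        then show ?thesis using F1 F2 unfolding \<Psi>_def i1 i3 ind_def by simp
      qed
    qed
  qed
qed

lemma inv_range:
  assumes "Inv K r p" "k < r"
  shows "0 \<le> p 0 k" "p 0 k \<le> 1"
proof -
  show "0 \<le> p 0 k" using assms unfolding Inv_def by auto
  have "p 0 k \<le> (\<Sum>j<r. p 0 j)"
    by (rule member_le_sum) (use assms in \<open>simp_all add: Inv_def\<close>)
  then show "p 0 k \<le> 1" using assms unfolding Inv_def by simp
qed

lemma psi_bdd: "0 \<le> a \<Longrightarrow> a \<le> 1 \<Longrightarrow> \<bar>\<Psi> K c a\<bar> \<le> 1"
  using hh_le[of a] unfolding \<Psi>_def hh_def by (auto simp: mult_nonneg_nonneg)

lemma int_bdd_AE: "(\<And>x. x \<in> set_pmf N \<Longrightarrow> \<bar>f x\<bar> \<le> B) \<Longrightarrow> integrable (measure_pmf N) (f :: 'a \<Rightarrow> real)"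
  by (rule measure_pmf.integrable_const_bound[where B=B]) (auto intro!: AE_pmfI)

lemma exp_psi:
  assumes inv: "\<forall>p\<in>set_pmf M. Inv K r p" and K: "K > 0" and r: "r \<ge> 2"
  shows "(\<integral>p. \<Psi> K c (p 0 (r - 1)) \<partial>M) =
    (1 - w1 K c) * measure (map_pmf (\<lambda>p. p 0 (r - 1)) M) {..c - 1 / K}
    + (w1 K c - w2 K c) * measure (map_pmf (\<lambda>p. p 0 (r - 1)) M) {..c}
    + w2 K c * measure (map_pmf (\<lambda>p. p 0 (r - 1)) M) {..c + 1 / K}"
proof -
  have "(\<integral>p. \<Psi> K c (p 0 (r - 1)) \<partial>M) = (\<integral>v. \<Psi> K c v \<partial>map_pmf (\<lambda>p. p 0 (r - 1)) M)"
    by simp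
  also have "\<dots> = (\<integral>v. (1 - w1 K c) * ind (v \<le> c - 1 / K) + (w1 K c - w2 K c) * ind (v \<le> c)
     + w2 K c * ind (v \<le> c + 1 / K) \<partial>map_pmf (\<lambda>p. p 0 (r - 1)) M)"
  proof (rule integral_cong_AE)
    show "AE v in measure_pmf (map_pmf (\<lambda>p. p 0 (r - 1)) M). \<Psi> K c v =
      (1 - w1 K c) * ind (v \<le> c - 1 / K) + (w1 K c - w2 K c) * ind (v \<le> c) + w2 K c * ind (v \<le> c + 1 / K)"
    proof (rule AE_pmfI)
      fix v assume "v \<in> set_pmf (map_pmf (\<lambda>p. p 0 (r - 1)) M)"
      then obtain p where p: "p \<in> set_pmf M" "v = p 0 (r - 1)" by auto
      have I: "Inv K r p" using inv p by auto
      obtain j :: int where "p 0 (r - 1) = of_int j / K" using I unfolding Inv_def by blast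
      moreover have "0 \<le> p 0 (r - 1)" "p 0 (r - 1) \<le> 1" using inv_range[OF I] r by auto
      ultimately show "\<Psi> K c v = (1 - w1 K c) * ind (v \<le> c - 1 / K) + (w1 K c - w2 K c) * ind (v \<le> c)
        + w2 K c * ind (v \<le> c + 1 / K)"
        using psi_lin[OF K] p by simp
    qed
  qed simp_all
  also note integral_lin
  finally show ?thesis .
qed

lemma neutral_upd:
  assumes N: "neutral g n r 0" and n: "n \<ge> 1" and r: "r \<ge> 2"
  shows "\<forall>x\<in>search_space n r. g x = g (x(0 := r - 1))"
proof
  fix x assume x: "x \<in> search_space n r"
  have x': "x(0 := r - 1) \<in> search_space n r" by (rule ss_upd[OF x _ n]) (use r in simp)
  have "\<forall>k. k \<noteq> 0 \<longrightarrow> x k = (x(0 := r - 1)) k" by simp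
  with N x x' show "g x = g (x(0 := r - 1))" unfolding neutral_def by blast
qed
theorem theorem3:
  fixes f g :: "(nat \<Rightarrow> nat) \<Rightarrow> real" and n r :: nat and K :: real
  assumes "n \<ge> 1" and "r \<ge> 2" and "K > 0"
    and "\<exists>m::nat. 1 / real r = real m * (1 / K)"
    and "weakly_prefers f n r 0 (r - 1)"
    and "neutral g n r 0"
  shows "\<forall>t::nat. stoch_dom (map_pmf (\<lambda>p. p 0 (r - 1)) (rcga f n r K t))
                             (map_pmf (\<lambda>q. q 0 (r - 1)) (rcga g n r K t))"
proof
  fix t :: nat
  have n: "n \<ge> 1" and r: "r \<ge> 2" and K: "K > 0" using assms by auto
  have Hf: "\<forall>x\<in>search_space n r. f x \<le> f (x(0 := r - 1))"
    using assms(5) unfolding weakly_prefers_def by auto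
  have Hg: "\<forall>x\<in>search_space n r. g x = g (x(0 := r - 1))"
    using neutral_upd[OF assms(6) n r] .
  have invf: "\<forall>p\<in>set_pmf (rcga f n r K t). Inv K r p" for t
    using inv_rcga[OF K _ n assms(4)] r by auto
  have invg: "\<forall>p\<in>set_pmf (rcga g n r K t). Inv K r p" for t
    using inv_rcga[OF K _ n assms(4)] r by auto
  have vim: "(\<lambda>p. p 0 (r - 1)) -` {..c} = {p. p 0 (r - 1) \<le> c}" for c :: real by auto
  have psi_int: "integrable (measure_pmf (rcga h n r K t)) (\<lambda>p. \<Psi> K c (p 0 (r - 1)))"
    if "\<forall>p\<in>set_pmf (rcga h n r K t). Inv K r p" for h t c
    by (rule int_bdd_AE[where B=1], rule psi_bdd) (use that inv_range r in auto)
  have m_int: "integrable (measure_pmf (rcga h n r K t)) (\<lambda>p. measure (rcga_step h n r K p) A)" for h t A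
    by (rule int_bdd[where B=1]) simp
  show "stoch_dom (map_pmf (\<lambda>p. p 0 (r - 1)) (rcga f n r K t)) (map_pmf (\<lambda>q. q 0 (r - 1)) (rcga g n r K t))"
    unfolding stoch_dom_def
  proof (induction t)
    case 0
    then show ?case by simp
  next
    case (Suc t)
    show ?case
    proof
      fix c :: real
      have "measure (map_pmf (\<lambda>p. p 0 (r - 1)) (rcga f n r K (Suc t))) {..c}
          = (\<integral>p. measure (rcga_step f n r K p) {q. q 0 (r - 1) \<le> c} \<partial>rcga f n r K t)"
        by (simp only: rcga.simps measure_map_pmf vim measure_bind_pmf')
      also have "\<dots> \<le> (\<integral>p. \<Psi> K c (p 0 (r - 1)) \<partial>rcga f n r K t)"
        by (rule integral_mono_AE[OF m_int psi_int[OF invf]], rule AE_pmfI,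
            rule step_bound[OF _ K n r Hf]) (use invf in auto)
      also have "\<dots> = (1 - w1 K c) * measure (map_pmf (\<lambda>p. p 0 (r - 1)) (rcga f n r K t)) {..c - 1 / K}
          + (w1 K c - w2 K c) * measure (map_pmf (\<lambda>p. p 0 (r - 1)) (rcga f n r K t)) {..c}
          + w2 K c * measure (map_pmf (\<lambda>p. p 0 (r - 1)) (rcga f n r K t)) {..c + 1 / K}"
        by (rule exp_psi[OF invf K r])
      also have "\<dots> \<le> (1 - w1 K c) * measure (map_pmf (\<lambda>p. p 0 (r - 1)) (rcga g n r K t)) {..c - 1 / K}
          + (w1 K c - w2 K c) * measure (map_pmf (\<lambda>p. p 0 (r - 1)) (rcga g n r K t)) {..c}
          + w2 K c * measure (map_pmf (\<lambda>p. p 0 (r - 1)) (rcga g n r K t)) {..c + 1 / K}"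
        by (intro add_mono mult_left_mono Suc.IH[rule_format] w_props)
      also have "\<dots> = (\<integral>p. \<Psi> K c (p 0 (r - 1)) \<partial>rcga g n r K t)"
        by (rule exp_psi[OF invg K r, symmetric])
      also have "\<dots> = (\<integral>p. measure (rcga_step g n r K p) {q. q 0 (r - 1) \<le> c} \<partial>rcga g n r K t)"
        by (rule integral_cong_AE, simp, simp, rule AE_pmfI,
            rule step_eq_neutral[OF _ K n r Hg, symmetric]) (use invg in auto)
      also have "\<dots> = measure (map_pmf (\<lambda>q. q 0 (r - 1)) (rcga g n r K (Suc t))) {..c}"
        by (simp only: rcga.simps measure_map_pmf vim measure_bind_pmf')
      finally show "measure (map_pmf (\<lambda>p. p 0 (r - 1)) (rcga f n r K (Suc t))) {..c}
          \<le> measure (map_pmf (\<lambda>q. q 0 (r - 1)) (rcga g n r K (Suc t))) {..c}" .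
    qed
  qed
qed

end
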